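(* Let $k$ be a positive integer and let $s$ be an even positive integer. Then there exists a hypergraph $\mathcal{F}$ (with $s < |e|$ for every hyperedge $e$ of $\mathcal{F}$) such that $\chi\left({\rm KG}^2(\mathcal{F}, s)\right) = k$ and $${\rm cd}^2(\mathcal{F}, l) = {\rm ecd}^2(\mathcal{F}, l) = k(2l - s + 1)$$ for each $l \in \left\{\frac{s}{2} + 1, \frac{s}{2} + 2, \dots, s\right\}$.
   Context: A hypergraph $\mathcal{F}$ consists of a finite vertex set $V(\mathcal{F})$ and a set $E(\mathcal{F}) \subseteq 2^{V(\mathcal{F})} \setminus \{\varnothing\}$ of hyperedges. For an integer $r \geq 2$ and a nonnegative integer $s$ with $s < |e|$ for every hyperedge $e$ of $\mathcal{F}$, the generalized Kneser hypergraph ${\rm KG}^r(\mathcal{F}, s)$ is the $r$-uniform hypergraph whose vertex set is $E(\mathcal{F})$, in which $r$ distinct hyperedges $e_1, \dots, e_r$ of $\mathcal{F}$ form a hyperedge whenever $|e_i \cap e_j| \leq s$ for all distinct $i, j \in \{1, \dots, r\}$. Its chromatic number $\chi$ is the minimum size of a set $C$ admitting a map $f : E(\mathcal{F}) \to C$ such that no hyperedge of ${\rm KG}^r(\mathcal{F}, s)$ is monochromatic (for $r = 2$ this is the ordinary chromatic number of the graph). For sets $A, B$ and a nonnegative integer $t$, write $A \subseteq_t B$ if $|A \setminus B| \leq t$. For a nonnegative integer $t$ with $t < |e|$ for all hyperedges $e$, the $t$-th $r$-colorability defect ${\rm cd}^r(\mathcal{F}, t)$ is the minimum cardinality of a set $X_0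 \subseteq V(\mathcal{F})$ for which there is a partition $\{X_1, \dots, X_r\}$ of $V(\mathcal{F}) \setminus X_0$ (parts may be empty) such that $e \not\subseteq_t X_i$ for every hyperedge $e \in E(\mathcal{F})$ and every $i \in \{1, \dots, r\}$. The $t$-th equitable $r$-colorability defect ${\rm ecd}^r(\mathcal{F}, t)$ is defined in the same way, with the additional requirement that $\big||X_i| - |X_j|\big| \leq 1$ for all $1 \leq i < j \leq r$. *)

theory Defs
  imports Main
begin

definition hypergraph :: "'a set \<Rightarrow> 'a set set \<Rightarrow> bool" where
  "hypergraph V E \<longleftrightarrow> finite V \<and> E \<subseteq> Pow V \<and> {} \<notin> E"

text \<open>A proper colouring of KG^r(F,s) with colours {0..<n}: no r distinct hyperedges that
  pairwise intersect in at most s elements receive the same colour.\<close>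
definition kneser_proper_col :: "nat \<Rightarrow> 'a set set \<Rightarrow> nat \<Rightarrow> ('a set \<Rightarrow> nat) \<Rightarrow> nat \<Rightarrow> bool" where
  "kneser_proper_col r E s f n \<longleftrightarrow>
     (\<forall>e\<in>E. f e < n) \<and>
     \<not> (\<exists>S. S \<subseteq> E \<and> card S = r \<and>
            (\<forall>e1\<in>S. \<forall>e2\<in>S. e1 \<noteq> e2 \<longrightarrow> card (e1 \<inter> e2) \<le> s) \<and>
            (\<exists>c. \<forall>e\<in>S. f e = c))"

definition kneser_chi :: "nat \<Rightarrow> 'a set set \<Rightarrow> nat \<Rightarrow> nat" where
  "kneser_chi r E s = (LEAST n. \<exists>f. kneser_proper_col r E s f n)"

text \<open>Admissible choice of X0 and partition X_1..X_r of V - X0 (parts may be empty)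
  such that no hyperedge e satisfies e \<subseteq>_t X_i, i.e. |e - X_i| > t.\<close>
definition cd_admissible :: "nat \<Rightarrow> 'a set \<Rightarrow> 'a set set \<Rightarrow> nat \<Rightarrow> 'a set \<Rightarrow> (nat \<Rightarrow> 'a set) \<Rightarrow> bool" where
  "cd_admissible r V E t X0 X \<longleftrightarrow>
     X0 \<subseteq> V \<and>
     (\<Union>i\<in>{1..r}. X i) = V - X0 \<and>
     (\<forall>i\<in>{1..r}. \<forall>j\<in>{1..r}. i \<noteq> j \<longrightarrow> X i \<inter> X j = {}) \<and>
     (\<forall>e\<in>E. \<forall>i\<in>{1..r}. \<not> (card (e - X i) \<le> t))"

definition cd :: "nat \<Rightarrow> 'a set \<Rightarrow> 'a set set \<Rightarrow> nat \<Rightarrow> nat" where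
  "cd r V E t = (LEAST n. \<exists>X0 X. cd_admissible r V E t X0 X \<and> card X0 = n)"

definition ecd :: "nat \<Rightarrow> 'a set \<Rightarrow> 'a set set \<Rightarrow> nat \<Rightarrow> nat" where
  "ecd r V E t = (LEAST n. \<exists>X0 X. cd_admissible r V E t X0 X \<and> card X0 = n \<and>
      (\<forall>i\<in>{1..r}. \<forall>j\<in>{1..r}. \<bar>int (card (X i)) - int (card (X j))\<bar> \<le> 1))"

end

theory Submission
  imports Defs
begin

lemma block_eq:
  assumes "0 < (m::nat)"
  shows "{x::nat. x div m = j \<and> P (x mod m)} = (\<lambda>p. j*m+p) ` {p. p < m \<and> P p}"
proof
  show "{x::nat. x div m = j \<and> P (x mod m)} \<subseteq> (\<lambda>p. j*m+p) ` {p. p < m \<and> P p}"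
  proof
    fix x assume "x \<in> {x::nat. x div m = j \<and> P (x mod m)}"
    then have "x div m = j" "P (x mod m)" by auto
    moreover have "x = j*m + x mod m" using \<open>x div m = j\<close> by (metis div_mult_mod_eq)
    ultimately show "x \<in> (\<lambda>p. j*m+p) ` {p. p < m \<and> P p}" using assms
      by (metis (mono_tags, lifting) image_eqI mem_Collect_eq mod_less_divisor)
  qed
  show "(\<lambda>p. j*m+p) ` {p. p < m \<and> P p} \<subseteq> {x::nat. x div m = j \<and> P (x mod m)}"
    using assms by auto
qed

lemma card_block:
  assumes "0 < (m::nat)"
  shows "card {x::nat. x div m = j \<and> P (x mod m)} = card {p. p < m \<and> P p}"
  unfolding block_eq[OF assms] by (rule card_image) (auto simp: inj_on_def)

lemma finite_block:
  assumes "0 < (m::nat)"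
  shows "finite {x::nat. x div m = j \<and> P (x mod m)}"
  unfolding block_eq[OF assms] by auto

lemma card_blocks:
  assumes "0 < (m::nat)"
  shows "card {x::nat. x < k*m \<and> P (x mod m)} = k * card {p. p < m \<and> P p}"
proof -
  have "{x::nat. x < k*m \<and> P (x mod m)} = (\<Union>j\<in>{..<k}. {x. x div m = j \<and> P (x mod m)})"
    using assms by (auto simp: div_less_iff_less_mult)
  moreover have "card (\<Union>j\<in>{..<k}. {x. x div m = j \<and> P (x mod m)})
      = (\<Sum>j\<in>{..<k}. card {x. x div m = j \<and> P (x mod m)})"
    by (rule card_UN_disjoint) (auto simp: finite_block[OF assms])
  ultimately show ?thesis using card_block[OF assms] by simp
qed

lemma card_edge:
  assumes "0 < (m::nat)"
  shows "card {x::nat. x div m = j} = m"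
  using card_block[OF assms, of j "\<lambda>_. True"] by simp

lemma lower_bound:
  assumes adm: "cd_admissible 2 {..<k*m} ((\<lambda>j. {x::nat. x div m = j}) ` {..<k}) l X0 X"
    and m: "m = s + 1"
  shows "k*(2*l+1-s) \<le> card X0"
proof -
  have m0: "0 < m" using m by simp
  have X0V: "X0 \<subseteq> {..<k*m}" and U: "X 1 \<union> X 2 = {..<k*m} - X0"
    and D: "X 1 \<inter> X 2 = {}"
    and C: "\<And>e i. e \<in> (\<lambda>j. {x::nat. x div m = j}) ` {..<k} \<Longrightarrow> i \<in> {1..2} \<Longrightarrow> \<not> card (e - X i) \<le> l"
  proof -
    have t: "{1..2::nat} = {1,2}" by auto
    show "X0 \<subseteq> {..<k*m}" using adm unfolding cd_admissible_def by blast
    show "X 1 \<union> X 2 = {..<k*m} - X0" using adm unfolding cd_admissible_def t by simp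
    show "X 1 \<inter> X 2 = {}" using adm unfolding cd_admissible_def t by simp
    show "\<not> card (e - X i) \<le> l" if "e \<in> (\<lambda>j. {x::nat. x div m = j}) ` {..<k}" "i \<in> {1..2}" for e i
      using adm that unfolding cd_admissible_def by blast
  qed
  have per: "2*l+1-s \<le> card (X0 \<inter> {x. x div m = j})" if "j < k" for j
  proof -
    let ?e = "{x::nat. x div m = j}"
    have eE: "?e \<in> (\<lambda>j. {x::nat. x div m = j}) ` {..<k}" using that by auto
    have c1: "l < card (?e - X 1)" using C[OF eE, of 1] by simp
    have c2: "l < card (?e - X 2)" using C[OF eE, of 2] by simp
    have fe: "finite ?e" using finite_block[OF m0, of j "\<lambda>_. True"] by simp
    have eV: "?e \<subseteq> {..<k*m}" using that m0
      by (auto simp: div_less_iff_less_mult[symmetric])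
    have un: "(?e - X 1) \<union> (?e - X 2) = ?e" using D by auto
    have int: "(?e - X 1) \<inter> (?e - X 2) = X0 \<inter> ?e" using U eV X0V by blast
    have "card (?e - X 1) + card (?e - X 2) = card ?e + card (X0 \<inter> ?e)"
      using card_Un_Int[of "?e - X 1" "?e - X 2"] fe un int by simp
    then show ?thesis using c1 c2 card_edge[OF m0, of j] m by (simp add: Int_commute)
  qed
  have fX0: "finite X0" using X0V finite_subset by blast
  have "(\<Union>j\<in>{..<k}. X0 \<inter> {x. x div m = j}) \<subseteq> X0" by auto
  then have "card (\<Union>j\<in>{..<k}. X0 \<inter> {x. x div m = j}) \<le> card X0"
    using fX0 card_mono by blast
  moreover have "card (\<Union>j\<in>{..<k}. X0 \<inter> {x. x div m = j})
     = (\<Sum>j\<in>{..<k}. card (X0 \<inter> {x. x div m = j}))"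
    by (rule card_UN_disjoint) (auto simp: fX0)
  moreover have "k*(2*l+1-s) \<le> (\<Sum>j\<in>{..<k}. card (X0 \<inter> {x. x div m = j}))"
    using sum_bounded_below[of "{..<k}" "2*l+1-s" "\<lambda>j. card (X0 \<inter> {x. x div m = j})"] per
    by simp
  ultimately show ?thesis by linarith
qed


lemma witness:
  fixes k m s l :: nat
  assumes m: "m = s + 1" and l1: "s \<le> 2*l" and l2: "l \<le> s"
  defines "a \<equiv> 2*l+1-s" and "b \<equiv> s - l"
  defines "X0 \<equiv> {x::nat. x < k*m \<and> x mod m < a}"
    and "X \<equiv> (\<lambda>i::nat. if i = 1 then {x::nat. x < k*m \<and> a \<le> x mod m \<and> x mod m < a+b}
                         else {x::nat. x < k*m \<and> a+b \<le> x mod m})"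
  shows "cd_admissible 2 {..<k*m} ((\<lambda>j. {x::nat. x div m = j}) ` {..<k}) l X0 X"
    and "card X0 = k*(2*l-s+1)"
    and "\<forall>i\<in>{1..2}. \<forall>j\<in>{1..2}. \<bar>int (card (X i)) - int (card (X j))\<bar> \<le> 1"
proof -
  have m0: "0 < m" using m by simp
  have t: "{1..2::nat} = {1,2}" by auto
  have ab: "a + b = l + 1" "a + 2*b = m" using l1 l2 m unfolding a_def b_def by auto
  have c1: "card {p. p < m \<and> p < a} = a"
  proof -
    have "{p. p < m \<and> p < a} = {..<a}" using ab by auto
    then show ?thesis by simp
  qed
  have c2: "card {p. p < m \<and> a + b \<le> p} = b"
  proof -
    have "{p. p < m \<and> a + b \<le> p} = {a+b..<m}" by auto
    then show ?thesis using ab by simp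
  qed
  have c3: "card {p. p < m \<and> (a \<le> p \<and> p < a+b)} = b"
  proof -
    have "{p. p < m \<and> (a \<le> p \<and> p < a+b)} = {a..<a+b}" using ab by auto
    then show ?thesis by simp
  qed
  have c4: "card {p. p < m \<and> \<not> (a \<le> p \<and> p < a+b)} = l + 1"
  proof -
    have "{p. p < m \<and> \<not> (a \<le> p \<and> p < a+b)} = {..<a} \<union> {a+b..<m}" using ab by auto
    moreover have "card ({..<a} \<union> {a+b..<m}) = a + (m - (a+b))"
      by (subst card_Un_disjoint) auto
    ultimately show ?thesis using ab by simp
  qed
  have c5: "card {p. p < m \<and> p < a+b} = l + 1"
  proof -
    have "{p. p < m \<and> p < a+b} = {..<a+b}" using ab by auto
    then show ?thesis using ab by simp
  qed
  show "card X0 = k*(2*l-s+1)"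
    unfolding X0_def using card_blocks[OF m0, of k "\<lambda>p. p < a"] c1 l1 unfolding a_def
    by (simp add: Suc_diff_le)
  have cX1: "card (X 1) = k*b" unfolding X_def
    using card_blocks[OF m0, of k "\<lambda>p. a \<le> p \<and> p < a+b"] c3 by simp
  have cX2: "card (X 2) = k*b" unfolding X_def
    using card_blocks[OF m0, of k "\<lambda>p. a+b \<le> p"] c2 by simp
  show "\<forall>i\<in>{1..2}. \<forall>j\<in>{1..2}. \<bar>int (card (X i)) - int (card (X j))\<bar> \<le> 1"
    unfolding t using cX1 cX2 by auto
  show "cd_admissible 2 {..<k*m} ((\<lambda>j. {x::nat. x div m = j}) ` {..<k}) l X0 X"
    unfolding cd_admissible_def t
  proof (intro conjI ballI)
    show "X0 \<subseteq> {..<k*m}" unfolding X0_def by auto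
    show "\<Union> (X ` {1, 2}) = {..<k*m} - X0" unfolding X_def X0_def by auto
    fix i j assume "i \<in> {1::nat,2}" "j \<in> {1::nat,2}"
    then show "i \<noteq> j \<longrightarrow> X i \<inter> X j = {}" unfolding X_def by auto
  next
    fix e i assume eE: "e \<in> (\<lambda>j. {x::nat. x div m = j}) ` {..<k}" and i: "i \<in> {1::nat,2}"
    then obtain j where j: "j < k" and e: "e = {x::nat. x div m = j}" by auto
    have lt: "\<And>x. x div m = j \<Longrightarrow> x < k*m" using j m0 
      by (metis div_less_iff_less_mult)
    show "\<not> card (e - X i) \<le> l"
    proof (cases "i = 1")
      case True
      have "e - X i = {x. x div m = j \<and> \<not> (a \<le> x mod m \<and> x mod m < a+b)}"
        unfolding e X_def True using lt by auto
      then show ?thesis using card_block[OF m0, of j "\<lambda>p. \<not> (a \<le> p \<and> p < a+b)"] c4 by simp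
    next
      case False
      then have "i = 2" using i by auto
      have "e - X i = {x. x div m = j \<and> x mod m < a+b}"
        unfolding e X_def using \<open>i = 2\<close> lt by auto
      then show ?thesis using card_block[OF m0, of j "\<lambda>p. p < a+b"] c5 by simp
    qed
  qed
qed


lemma chi_part:
  fixes k m s :: nat
  assumes m0: "0 < m"
  shows "kneser_chi 2 ((\<lambda>j. {x::nat. x div m = j}) ` {..<k}) s = k"
proof -
  define edge where "edge = (\<lambda>j. {x::nat. x div m = j})"
  have inj: "inj_on edge {..<k}"
  proof (rule inj_onI)
    fix i j assume "edge i = edge j"
    moreover have "i*m \<in> edge i" unfolding edge_def using m0 by simp
    ultimately have "i*m \<in> edge j" by simp
    then show "i = j" unfolding edge_def using m0 by simp
  qed
  have disj: "i \<noteq> j \<Longrightarrow> edge i \<inter> edge j = {}" for i j unfolding edge_def by auto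
  define f where "f = the_inv_into {..<k} edge"
  have fe: "j < k \<Longrightarrow> f (edge j) = j" for j
    unfolding f_def using the_inv_into_f_f[OF inj] by simp
  show ?thesis unfolding kneser_chi_def edge_def[symmetric]
  proof (rule Least_equality)
    show "\<exists>f. kneser_proper_col 2 (edge ` {..<k}) s f k"
    proof (intro exI)
      show "kneser_proper_col 2 (edge ` {..<k}) s f k"
        unfolding kneser_proper_col_def
      proof (intro conjI notI)
        show "\<forall>e\<in>edge ` {..<k}. f e < k" using fe by auto
      next
        assume "\<exists>S\<subseteq>edge ` {..<k}. card S = 2 \<and>
          (\<forall>e1\<in>S. \<forall>e2\<in>S. e1 \<noteq> e2 \<longrightarrow> card (e1 \<inter> e2) \<le> s) \<and> (\<exists>c. \<forall>e\<in>S. f e = c)"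
        then obtain S c where S: "S \<subseteq> edge ` {..<k}" "card S = 2" "\<forall>e\<in>S. f e = c" by blast
        then obtain e1 e2 where "S = {e1, e2}" "e1 \<noteq> e2" by (meson card_2_iff)
        then show False using S fe by auto
      qed
    qed
  next
    fix n assume "\<exists>g. kneser_proper_col 2 (edge ` {..<k}) s g n"
    then obtain g where g: "kneser_proper_col 2 (edge ` {..<k}) s g n" by blast
    have gi: "g (edge i) \<noteq> g (edge j)" if "i < k" "j < k" "i \<noteq> j" for i j
    proof
      assume eq: "g (edge i) = g (edge j)"
      have ne: "edge i \<noteq> edge j" using inj that by (meson inj_on_def lessThan_iff)
      let ?S = "{edge i, edge j}"
      have "?S \<subseteq> edge ` {..<k}" "card ?S = 2" using that ne by auto
      moreover have "\<forall>e1\<in>?S. \<forall>e2\<in>?S. e1 \<noteq> e2 \<longrightarrow> card (e1 \<inter> e2) \<le> s"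
        using disj[OF \<open>i \<noteq> j\<close>] by (auto simp: Int_commute)
      moreover have "\<forall>e\<in>?S. g e = g (edge i)" using eq by auto
      ultimately show False using g unfolding kneser_proper_col_def by blast
    qed
    have "inj_on (g \<circ> edge) {..<k}" using gi by (auto simp: inj_on_def)
    moreover have "(g \<circ> edge) ` {..<k} \<subseteq> {..<n}" using g unfolding kneser_proper_col_def by auto
    ultimately have "card {..<k} \<le> card {..<n}" by (meson card_inj_on_le finite_lessThan)
    then show "k \<le> n" by simp
  qed
qed

theorem theorem3:
  fixes k s :: nat
  assumes "k > 0" and "s > 0" and "even s"
  shows "\<exists>(V::nat set) E. hypergraph V E \<and> (\<forall>e\<in>E. s < card e) \<and>
           kneser_chi 2 E s = k \<and>
           (\<forall>l\<in>{s div 2 + 1..s}. cd 2 V E l = k * (2 * l - s + 1) \<and>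
                                  ecd 2 V E l = k * (2 * l - s + 1))"
proof (intro exI conjI)
  define m where "m = s + 1"
  have m0: "0 < m" unfolding m_def by simp
  let ?V = "{..<k*m}"
  let ?E = "(\<lambda>j. {x::nat. x div m = j}) ` {..<k}"
  show "hypergraph ?V ?E" unfolding hypergraph_def
  proof (intro conjI)
    show "finite ?V" by simp
    show "?E \<subseteq> Pow ?V" using m0 by (auto simp: div_less_iff_less_mult[symmetric])
    show "{} \<notin> ?E"
    proof
      assume "{} \<in> ?E"
      then obtain j where "{} = {x::nat. x div m = j}" by auto
      moreover have "j*m \<in> {x::nat. x div m = j}" using m0 by simp
      ultimately show False by blast
    qed
  qed
  show "\<forall>e\<in>?E. s < card e" using card_edge[OF m0] m_def by auto
  show "kneser_chi 2 ?E s = k" by (rule chi_part[OF m0])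
  show "\<forall>l\<in>{s div 2 + 1..s}. cd 2 ?V ?E l = k * (2 * l - s + 1) \<and>
                                  ecd 2 ?V ?E l = k * (2 * l - s + 1)"
  proof (intro ballI conjI)
  fix l assume l: "l \<in> {s div 2 + 1..s}"
  have l1: "s \<le> 2*l" and l2: "l \<le> s" using l by auto
  have eqv: "2*l+1-s = 2*l-s+1" using l1 by simp
  note W = witness[OF m_def l1 l2, of k]
  show "cd 2 ?V ?E l = k * (2 * l - s + 1)" unfolding cd_def
  proof (rule Least_equality)
    show "\<exists>X0 X. cd_admissible 2 ?V ?E l X0 X \<and> card X0 = k * (2 * l - s + 1)"
      using W(1,2) by blast
    fix n assume "\<exists>X0 X. cd_admissible 2 ?V ?E l X0 X \<and> card X0 = n"
    then show "k * (2 * l - s + 1) \<le> n" using lower_bound[OF _ m_def] eqv by metis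
  qed
  show "ecd 2 ?V ?E l = k * (2 * l - s + 1)" unfolding ecd_def
  proof (rule Least_equality)
    show "\<exists>X0 X. cd_admissible 2 ?V ?E l X0 X \<and> card X0 = k * (2 * l - s + 1) \<and>
      (\<forall>i\<in>{1..2}. \<forall>j\<in>{1..2}. \<bar>int (card (X i)) - int (card (X j))\<bar> \<le> 1)"
      using W by blast
    fix n assume "\<exists>X0 X. cd_admissible 2 ?V ?E l X0 X \<and> card X0 = n \<and>
      (\<forall>i\<in>{1..2}. \<forall>j\<in>{1..2}. \<bar>int (card (X i)) - int (card (X j))\<bar> \<le> 1)"
    then show "k * (2 * l - s + 1) \<le> n" using lower_bound[OF _ m_def] eqv by metis
  qed
qed
qed

end
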